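(* Let $k,\ell \ge 2$ and $n \geq k+\ell$. Let $\mathcal F \subset \binom{[n]}{k}$ and $\mathcal G \subset \binom{[n]}{\ell}$ be cross-intersecting and saturated in the sense that every $k$-set meeting all members of $\mathcal G$ belongs to $\mathcal F$ and every $\ell$-set meeting all members of $\mathcal F$ belongs to $\mathcal G$. For a family $\mathcal H$ let $\mathcal T_2(\mathcal H) = \{\{i,j\} \in \binom{[n]}{2} : H \cap \{i,j\} \neq \emptyset \text{ for all } H \in \mathcal H\}$. Then $\mathcal T_2(\mathcal F)$ and $\mathcal T_2(\mathcal G)$ are cross-intersecting, i.e., every pair in $\mathcal T_2(\mathcal F)$ meets every pair in $\mathcal T_2(\mathcal G)$.
   Context: Families are cross-intersecting if every member of one meets every member of the other. *)

theory Defs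
  imports Main
begin

definition k_subsets :: "nat \<Rightarrow> nat \<Rightarrow> nat set set" where
  "k_subsets n k = {A. A \<subseteq> {1..n} \<and> card A = k}"

definition cross_intersecting :: "'a set set \<Rightarrow> 'a set set \<Rightarrow> bool" where
  "cross_intersecting F G \<longleftrightarrow> (\<forall>A\<in>F. \<forall>B\<in>G. A \<inter> B \<noteq> {})"

definition T2 :: "nat \<Rightarrow> nat set set \<Rightarrow> nat set set" where
  "T2 n H = {P \<in> k_subsets n 2. \<forall>X\<in>H. X \<inter> P \<noteq> {}}"

end

theory Submission
  imports Defs
begin

theorem fact4p6:
  fixes n k l :: nat and F G :: "nat set set"
  assumes "k \<ge> 2" and "l \<ge> 2" and "n \<ge> k + l"
    and "F \<subseteq> k_subsets n k" and "G \<subseteq> k_subsets n l"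
    and "cross_intersecting F G"
    and "\<And>A. A \<in> k_subsets n k \<Longrightarrow> (\<forall>B\<in>G. A \<inter> B \<noteq> {}) \<Longrightarrow> A \<in> F"
    and "\<And>B. B \<in> k_subsets n l \<Longrightarrow> (\<forall>A\<in>F. A \<inter> B \<noteq> {}) \<Longrightarrow> B \<in> G"
  shows "cross_intersecting (T2 n F) (T2 n G)"
  unfolding cross_intersecting_def
proof (intro ballI notI)
  fix P Q assume P: "P \<in> T2 n F" and Q: "Q \<in> T2 n G" and dis: "P \<inter> Q = {}"
  have Psub: "P \<subseteq> {1..n}" "card P = 2" and PF: "\<forall>X\<in>F. X \<inter> P \<noteq> {}"
    using P unfolding T2_def k_subsets_def by auto
  have Qsub: "Q \<subseteq> {1..n}" "card Q = 2" and QG: "\<forall>X\<in>G. X \<inter> Q \<noteq> {}"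
    using Q unfolding T2_def k_subsets_def by auto
  have fP: "finite P" "finite Q" using Psub Qsub finite_subset by blast+
  have cPQ: "card (P \<union> Q) = 4" using dis Psub Qsub fP card_Un_disjoint by fastforce
  have "card ({1..n} - (P \<union> Q)) = n - 4"
    using Psub Qsub cPQ by (subst card_Diff_subset) (auto simp: fP)
  hence "k - 2 \<le> card ({1..n} - (P \<union> Q))" using assms(1-3) by simp
  then obtain S where S: "S \<subseteq> {1..n} - (P \<union> Q)" "card S = k - 2"
    using obtain_subset_with_card_n by metis
  have fS: "finite S" using S(1) finite_subset by blast
  define A where "A = Q \<union> S"
  have "card A = k" unfolding A_def using S fS fP assms(1) Qsub
    by (subst card_Un_disjoint) auto
  hence Ak: "A \<in> k_subsets n k" unfolding k_subsets_def A_def using S Qsub by auto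
  have "\<forall>B\<in>G. A \<inter> B \<noteq> {}" using QG unfolding A_def by blast
  hence "A \<in> F" using assms(7) Ak by blast
  hence "A \<inter> P \<noteq> {}" using PF by blast
  moreover have "A \<inter> P = {}" unfolding A_def using S dis by blast
  ultimately show False by blast
qed

end
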